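(* For every constant $c_0>0$ there is $C_0>0$ such that for every $C\ge C_0$ the following holds for all sufficiently large $n$. Let $1/n\le\theta\le1$, $p=\lceil Cn\log^3 n\rceil$, and $T:=\dfrac{c_0\,p\sqrt{\theta/n}}{\log n}$. Let $X$ be the $n\times p$ random matrix with iid entries $x_{ij}=\chi_{ij}\xi_{ij}$, $\chi_{ij}$ iid indicators with $\mathbb{P}(\chi_{ij}=1)=\theta$ and $\xi_{ij}$ iid Rademacher, independent of the $\chi$'s. Let $\alpha=2^{l}\cdot\frac{2}{n}$ for an integer $l\ge0$ with $\alpha\le 1$. Then for all $v,w\in\mathbb{R}^n$ with $\|v\|_1\le1$, $\|w\|_1\le1$, $\|v-w\|_\infty\le2\alpha$ and $|\mu_v-\mu_w|\le T/6$, $$\mathbb{P}\Big(\big|\,\|X^Tv\|_1-\|X^Tw\|_1\,\big|\ge T\Big)\le\exp(-5\alpha^{-1}\log n).$$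
   Context: $\mu_v:=\mathbb{E}\|X^Tv\|_1$. Rademacher variables take values $\pm1$ with probability $1/2$ each. *)

theory Defs
  imports "HOL-Probability.Probability"
begin

definition entry_pmf :: "real \<Rightarrow> real pmf" where
  "entry_pmf \<theta> = map_pmf (\<lambda>(c, s). (if c then 1 else 0) * (if s then 1 else -1))
                      (pair_pmf (bernoulli_pmf \<theta>) (bernoulli_pmf (1/2)))"

definition matrix_pmf :: "nat \<Rightarrow> nat \<Rightarrow> real \<Rightarrow> (nat \<times> nat \<Rightarrow> real) pmf" where
  "matrix_pmf n p \<theta> = Pi_pmf ({..<n} \<times> {..<p}) 0 (\<lambda>_. entry_pmf \<theta>)"

definition XT_l1 :: "nat \<Rightarrow> nat \<Rightarrow> (nat \<times> nat \<Rightarrow> real) \<Rightarrow> (nat \<Rightarrow> real) \<Rightarrow> real" where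
  "XT_l1 n p X v = (\<Sum>j<p. \<bar>\<Sum>i<n. X (i, j) * v i\<bar>)"

definition mu :: "nat \<Rightarrow> nat \<Rightarrow> real \<Rightarrow> (nat \<Rightarrow> real) \<Rightarrow> real" where
  "mu n p \<theta> v = measure_pmf.expectation (matrix_pmf n p \<theta>) (\<lambda>X. XT_l1 n p X v)"

end

theory Submission
  imports Defs
begin

lemma exp_quad_bound: "exp (x::real) \<le> 1 + x + x^2/2 * exp \<bar>x\<bar>"
proof -
  obtain t where t: "\<bar>t\<bar> \<le> \<bar>x\<bar>" "exp x = (\<Sum>m<2. (x ^ m) / fact m) + (exp t / fact 2) * x ^ 2"
    using Maclaurin_exp_le[of x 2] by blast
  have "exp t \<le> exp \<bar>x\<bar>" using t(1) by simp
  hence "exp t / 2 * x^2 \<le> exp \<bar>x\<bar> / 2 * x^2" by (intro mult_right_mono) auto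
  thus ?thesis using t(2) by (simp add: eval_nat_numeral algebra_simps)
qed

lemma exp_small_bound: assumes "0 \<le> (B::real)" "B \<le> 1" shows "exp B \<le> 1 + 3 * B"
proof -
  have 1: "exp B \<le> 1 + B + B^2/2 * exp B" using exp_quad_bound[of B] assms by simp
  have 2: "exp B \<le> 3" using assms exp_le by (smt (verit) exp_le_cancel_iff)
  have 3: "B^2 \<le> B" using mult_left_le_one_le[of B B] assms by (simp add: power2_eq_square)
  have "B^2 * exp B \<le> B * 3" using 2 3 assms by (intro mult_mono) auto
  moreover have "B^2/2 * exp B = (B^2 * exp B)/2" by simp
  ultimately show ?thesis using 1 assms by linarith
qed

lemma sq_le_cosh: assumes "0 \<le> (t::real)" shows "t^2 \<le> 2 * (exp t + exp (-t) - 2)"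
proof -
  have "1 + t + t^2/2 \<le> exp t" using exp_lower_Taylor_quadratic[OF assms] by simp
  moreover have "1 - t \<le> exp (-t)" using exp_ge_add_one_self[of "-t"] by simp
  ultimately show ?thesis by simp
qed

lemma sq_exp_bound: assumes "0 \<le> (t::real)"
  shows "t^2 * exp t \<le> 2 * (exp (2*t) + exp (-(2*t)) - 2)"
proof -
  define u where "u = exp t"
  have u: "u \<ge> 1" using assms by (simp add: u_def)
  have w: "exp (-t) = 1/u" by (simp add: u_def exp_minus inverse_eq_divide)
  have e2: "exp (2*t) = u^2" by (simp add: u_def power2_eq_square flip: exp_add)
  have e2': "exp (-(2*t)) = 1/u^2" using e2 by (simp add: exp_minus inverse_eq_divide)
  have "t^2 * u \<le> 2 * (u + 1/u - 2) * u" using sq_le_cosh[OF assms] w u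
    by (intro mult_right_mono) (auto simp: u_def)
  also have "\<dots> = 2 * (u - 1)^2" using u by (simp add: field_simps power2_eq_square)
  also have "\<dots> \<le> 2 * (u^2 + 1/u^2 - 2)"
  proof -
    have "u^2 + 1/u^2 - 2 = (u - 1/u)^2" using u by (simp add: field_simps power2_eq_square)
    moreover have "u - 1 \<le> u - 1/u" using u by (simp add: field_simps)
    moreover have "0 \<le> u - 1" using u by simp
    ultimately show ?thesis by (simp add: power_mono)
  qed
  finally show ?thesis by (simp add: u_def[symmetric] e2 e2')
qed

lemma ch_bound: assumes "\<bar>z::real\<bar> \<le> 1" shows "(exp z + exp (-z))/2 - 1 \<le> 3/2 * z^2"
proof -
  have "exp z \<le> 1 + z + z^2/2 * exp \<bar>z\<bar>" by (rule exp_quad_bound)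
  moreover have "exp (-z) \<le> 1 - z + z^2/2 * exp \<bar>z\<bar>" using exp_quad_bound[of "-z"] by simp
  moreover have "exp \<bar>z\<bar> \<le> 3" using assms
    using exp_le by (smt (verit) exp_le_cancel_iff)
  moreover have "z^2/2 * exp \<bar>z\<bar> \<le> z^2/2 * 3" using calculation(3) by (intro mult_left_mono) auto
  ultimately show ?thesis by (simp add: field_simps)
qed

lemma finite_set_entry: "finite (set_pmf (entry_pmf \<theta>))"
  unfolding entry_pmf_def set_map_pmf
  by (rule finite_imageI) (rule finite_subset[of _ UNIV], auto)

lemma entry_mgf:
  assumes "0 \<le> \<theta>" "\<theta> \<le> 1"
  shows "measure_pmf.expectation (entry_pmf \<theta>) (\<lambda>x. exp (z * x))
       = 1 - \<theta> + \<theta> * ((exp z + exp (-z)) / 2)"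
proof -
  have U: "(UNIV :: (bool \<times> bool) set) = {(True,True),(True,False),(False,True),(False,False)}"
    by auto
  have "measure_pmf.expectation (entry_pmf \<theta>) (\<lambda>x. exp (z * x)) =
     (\<Sum>a\<in>UNIV. pmf (pair_pmf (bernoulli_pmf \<theta>) (bernoulli_pmf (1/2))) a *\<^sub>R
        exp (z * ((\<lambda>(c, s). (if c then 1 else 0) * (if s then 1 else -1)) a)))"
    unfolding entry_pmf_def integral_map_pmf
    by (rule integral_measure_pmf) auto
  also have "\<dots> = 1 - \<theta> + \<theta> * ((exp z + exp (-z)) / 2)"
    using assms by (simp add: U pmf_pair algebra_simps)
  finally show ?thesis .
qed

lemma finite_set_Pi:
  assumes "finite A" "\<And>x. x \<in> A \<Longrightarrow> finite (set_pmf (p x))"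
  shows "finite (set_pmf (Pi_pmf A d p))"
  using assms by (simp add: set_Pi_pmf finite_PiE_dflt)

lemma Pi_pmf_prod_set:
  assumes A: "finite A" and B: "finite B"
  shows "Pi_pmf (A \<times> B) d (\<lambda>_. e) =
         map_pmf (\<lambda>M x. M (snd x) (fst x)) (Pi_pmf B (\<lambda>_. d) (\<lambda>_. Pi_pmf A d (\<lambda>_. e)))"
proof (rule pmf_eqI)
  fix X :: "'a \<times> 'b \<Rightarrow> 'c"
  define f :: "('b \<Rightarrow> 'a \<Rightarrow> 'c) \<Rightarrow> 'a \<times> 'b \<Rightarrow> 'c" where "f = (\<lambda>M x. M (snd x) (fst x))"
  define M0 where "M0 = (\<lambda>j i. X (i, j))"
  have inj: "inj f"
    unfolding f_def inj_def fun_eq_iff by auto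
  have X: "X = f M0" by (simp add: f_def M0_def)
  have "pmf (map_pmf f (Pi_pmf B (\<lambda>_. d) (\<lambda>_. Pi_pmf A d (\<lambda>_. e)))) X
      = pmf (Pi_pmf B (\<lambda>_. d) (\<lambda>_. Pi_pmf A d (\<lambda>_. e))) M0"
    unfolding X by (rule pmf_map_inj'[OF inj])
  also have "\<dots> = pmf (Pi_pmf (A \<times> B) d (\<lambda>_. e)) X"
  proof (cases "\<forall>x. x \<notin> A \<times> B \<longrightarrow> X x = d")
    case True
    have "pmf (Pi_pmf B (\<lambda>_. d) (\<lambda>_. Pi_pmf A d (\<lambda>_. e))) M0
        = (\<Prod>j\<in>B. pmf (Pi_pmf A d (\<lambda>_. e)) (M0 j))"
      using True B by (subst pmf_Pi) (auto simp: M0_def fun_eq_iff)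
    also have "\<dots> = (\<Prod>j\<in>B. \<Prod>i\<in>A. pmf e (X (i, j)))"
      using True A by (intro prod.cong refl) (subst pmf_Pi, auto simp: M0_def)
    also have "\<dots> = (\<Prod>i\<in>A. \<Prod>j\<in>B. pmf e (X (i, j)))"
      by (rule prod.swap)
    also have "\<dots> = (\<Prod>x\<in>A \<times> B. pmf e (X x))"
      by (simp add: prod.cartesian_product case_prod_beta')
    also have "\<dots> = pmf (Pi_pmf (A \<times> B) d (\<lambda>_. e)) X"
      using True A B by (subst pmf_Pi) auto
    finally show ?thesis .
  next
    case False
    then obtain i j where ij: "(i, j) \<notin> A \<times> B" "X (i, j) \<noteq> d" by auto
    have r: "pmf (Pi_pmf (A \<times> B) d (\<lambda>_. e)) X = 0"
      using False A B by (subst pmf_Pi) auto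
    show ?thesis
    proof (cases "j \<in> B")
      case False
      hence "M0 j \<noteq> (\<lambda>_. d)" using ij by (auto simp: M0_def fun_eq_iff)
      thus ?thesis using r B False by (subst pmf_Pi) auto
    next
      case True
      with ij have iA: "i \<notin> A" by auto
      have "pmf (Pi_pmf A d (\<lambda>_. e)) (M0 j) = 0"
        using A iA ij by (subst pmf_Pi) (auto simp: M0_def)
      hence "(\<Prod>j\<in>B. pmf (Pi_pmf A d (\<lambda>_. e)) (M0 j)) = 0"
        using True B by (intro prod_zero) auto
      thus ?thesis using r B by (subst pmf_Pi) auto
    qed
  qed
  finally show "pmf (Pi_pmf (A \<times> B) d (\<lambda>_. e)) X =
      pmf (map_pmf (\<lambda>M x. M (snd x) (fst x)) (Pi_pmf B (\<lambda>_. d) (\<lambda>_. Pi_pmf A d (\<lambda>_. e)))) X"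
    by (simp add: f_def)
qed

definition colQ :: "nat \<Rightarrow> real \<Rightarrow> (nat \<Rightarrow> real) pmf" where
  "colQ n \<theta> = Pi_pmf {..<n} 0 (\<lambda>_. entry_pmf \<theta>)"

lemma finite_colQ: "finite (set_pmf (colQ n \<theta>))"
  unfolding colQ_def by (rule finite_set_Pi) (auto simp: finite_set_entry)

lemma matrix_col: "matrix_pmf n p \<theta> =
   map_pmf (\<lambda>M x. M (snd x) (fst x)) (Pi_pmf {..<p} (\<lambda>_. 0) (\<lambda>_. colQ n \<theta>))"
  unfolding matrix_pmf_def colQ_def by (rule Pi_pmf_prod_set) auto

lemma finite_nested: "finite (set_pmf (Pi_pmf {..<(p::nat)} (\<lambda>_. 0) (\<lambda>_. colQ n \<theta>)))"
  by (rule finite_set_Pi) (auto simp: finite_colQ)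

lemma matrix_prod:
  fixes F :: "(nat \<Rightarrow> real) \<Rightarrow> real"
  assumes "\<And>c. F c \<ge> 0"
  shows "measure_pmf.expectation (matrix_pmf n p \<theta>) (\<lambda>X. \<Prod>j<p. F (\<lambda>i. X (i, j)))
       = (measure_pmf.expectation (colQ n \<theta>) F) ^ p"
proof -
  have "measure_pmf.expectation (matrix_pmf n p \<theta>) (\<lambda>X. \<Prod>j<p. F (\<lambda>i. X (i, j)))
     = measure_pmf.expectation (Pi_pmf {..<p} (\<lambda>_. 0) (\<lambda>_. colQ n \<theta>)) (\<lambda>M. \<Prod>j\<in>{..<p}. F (M j))"
    unfolding matrix_col by (subst integral_map_pmf) simp
  also have "\<dots> = (\<Prod>j\<in>{..<p}. measure_pmf.expectation (colQ n \<theta>) F)"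
    by (rule expectation_prod_Pi_pmf) (auto simp: assms integrable_measure_pmf_finite finite_colQ)
  finally show ?thesis by simp
qed

lemma matrix_sum:
  "measure_pmf.expectation (matrix_pmf n p \<theta>) (\<lambda>X. \<Sum>j<p. G (\<lambda>i. X (i, j)))
       = real p * measure_pmf.expectation (colQ n \<theta>) G"
proof -
  have "measure_pmf.expectation (matrix_pmf n p \<theta>) (\<lambda>X. \<Sum>j<p. G (\<lambda>i. X (i, j)))
     = measure_pmf.expectation (Pi_pmf {..<p} (\<lambda>_. 0) (\<lambda>_. colQ n \<theta>)) (\<lambda>M. \<Sum>j\<in>{..<p}. G (M j))"
    unfolding matrix_col integral_map_pmf by simp
  also have "\<dots> = (\<Sum>j\<in>{..<p}. measure_pmf.expectation (Pi_pmf {..<p} (\<lambda>_. 0) (\<lambda>_. colQ n \<theta>)) (\<lambda>M. G (M j)))"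
    by (rule Bochner_Integration.integral_sum) (auto simp: integrable_measure_pmf_finite finite_nested)
  also have "\<dots> = (\<Sum>j\<in>{..<p}. measure_pmf.expectation (colQ n \<theta>) G)"
  proof (intro sum.cong refl)
    fix j assume j: "j \<in> {..<p}"
    have "measure_pmf.expectation (Pi_pmf {..<p} (\<lambda>_. 0) (\<lambda>_. colQ n \<theta>)) (\<lambda>M. G (M j))
        = measure_pmf.expectation (map_pmf (\<lambda>M. M j) (Pi_pmf {..<p} (\<lambda>_. 0) (\<lambda>_. colQ n \<theta>))) G"
      by simp
    also have "map_pmf (\<lambda>M. M j) (Pi_pmf {..<p} (\<lambda>_. 0) (\<lambda>_. colQ n \<theta>)) = colQ n \<theta>"
      using j by (subst Pi_pmf_component) auto
    finally show "measure_pmf.expectation (Pi_pmf {..<p} (\<lambda>_. 0) (\<lambda>_. colQ n \<theta>)) (\<lambda>M. G (M j))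
        = measure_pmf.expectation (colQ n \<theta>) G" .
  qed
  finally show ?thesis by simp
qed

definition ch :: "real \<Rightarrow> real" where "ch z = (exp z + exp (-z)) / 2"

lemma ch_ge1: "ch z \<ge> 1"
proof -
  have "1 + z \<le> exp z" "1 - z \<le> exp (-z)" using exp_ge_add_one_self[of z] exp_ge_add_one_self[of "-z"] by auto
  hence "2 \<le> exp z + exp (-z)" by linarith
  thus ?thesis unfolding ch_def by simp
qed

lemma ch_neg: "ch (-z) = ch z" by (simp add: ch_def)

lemma col_mgf:
  assumes "0 \<le> \<theta>" "\<theta> \<le> 1"
  shows "measure_pmf.expectation (colQ n \<theta>) (\<lambda>c. exp (\<mu> * (\<Sum>i<n. c i * d i)))
       = (\<Prod>i<n. 1 + \<theta> * (ch (\<mu> * d i) - 1))"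
proof -
  have "measure_pmf.expectation (colQ n \<theta>) (\<lambda>c. exp (\<mu> * (\<Sum>i<n. c i * d i)))
     = measure_pmf.expectation (colQ n \<theta>) (\<lambda>c. \<Prod>i\<in>{..<n}. exp ((\<mu> * d i) * c i))"
    by (simp add: sum_distrib_left exp_sum mult_ac)
  also have "\<dots> = (\<Prod>i\<in>{..<n}. measure_pmf.expectation (entry_pmf \<theta>) (\<lambda>x. exp ((\<mu> * d i) * x)))"
    unfolding colQ_def
    by (rule expectation_prod_Pi_pmf) (auto simp: integrable_measure_pmf_finite finite_set_entry)
  also have "\<dots> = (\<Prod>i<n. 1 + \<theta> * (ch (\<mu> * d i) - 1))"
    using assms by (intro prod.cong refl, subst entry_mgf) (auto simp: ch_def algebra_simps)
  finally show ?thesis .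
qed

lemma prod_le_exp_sum:
  assumes "\<And>i. i \<in> I \<Longrightarrow> (0::real) \<le> a i"
  shows "(\<Prod>i\<in>I. 1 + a i) \<le> exp (\<Sum>i\<in>I. a i)"
proof (cases "finite I")
  case True
  have "(\<Prod>i\<in>I. 1 + a i) \<le> (\<Prod>i\<in>I. exp (a i))"
    using assms by (intro prod_mono) (auto simp: exp_ge_add_one_self add_nonneg_nonneg)
  thus ?thesis using True by (simp add: exp_sum)
qed simp

lemma col_mgf_bound:
  assumes "0 \<le> \<theta>" "\<theta> \<le> 1" "\<forall>i<n. \<bar>\<mu> * d i\<bar> \<le> 1"
      "3/2 * \<theta> * \<mu>^2 * (\<Sum>i<n. (d i)^2) \<le> 1"
  shows "measure_pmf.expectation (colQ n \<theta>) (\<lambda>c. exp (\<mu> * (\<Sum>i<n. c i * d i)))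
       \<le> 1 + 3 * (3/2 * \<theta> * \<mu>^2 * (\<Sum>i<n. (d i)^2))"
proof -
  have nn: "0 \<le> \<theta> * (ch (\<mu> * d i) - 1)" for i using assms ch_ge1[of "\<mu> * d i"] by simp
  have "(\<Prod>i<n. 1 + \<theta> * (ch (\<mu> * d i) - 1)) \<le> exp (\<Sum>i<n. \<theta> * (ch (\<mu> * d i) - 1))"
    by (rule prod_le_exp_sum) (use nn in auto)
  also have "(\<Sum>i<n. \<theta> * (ch (\<mu> * d i) - 1)) \<le> (\<Sum>i<n. \<theta> * (3/2 * (\<mu> * d i)^2))"
  proof (intro sum_mono mult_left_mono)
    fix i assume "i \<in> {..<n}"
    thus "ch (\<mu> * d i) - 1 \<le> 3/2 * (\<mu> * d i)^2" using assms ch_bound[of "\<mu> * d i"] by (simp add: ch_def)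
  qed (use assms in auto)
  also have "\<dots> = 3/2 * \<theta> * \<mu>^2 * (\<Sum>i<n. (d i)^2)"
    by (simp add: sum_distrib_left power_mult_distrib mult_ac)
  finally have "(\<Prod>i<n. 1 + \<theta> * (ch (\<mu> * d i) - 1)) \<le> exp (3/2 * \<theta> * \<mu>^2 * (\<Sum>i<n. (d i)^2))"
    by simp
  also have "\<dots> \<le> 1 + 3 * (3/2 * \<theta> * \<mu>^2 * (\<Sum>i<n. (d i)^2))"
    using assms by (intro exp_small_bound) (auto intro!: sum_nonneg mult_nonneg_nonneg)
  finally show ?thesis using col_mgf[OF assms(1,2)] by simp
qed

lemma Y_bound:
  assumes "0 \<le> \<theta>" "\<theta> \<le> 1" "la > 0" "\<forall>i<n. 2 * la * \<bar>d i\<bar> \<le> 1"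
      "6 * \<theta> * la^2 * (\<Sum>i<n. (d i)^2) \<le> 1"
  shows "measure_pmf.expectation (colQ n \<theta>) (\<lambda>c. (\<Sum>i<n. c i * d i)^2 * exp (la * \<bar>\<Sum>i<n. c i * d i\<bar>))
       \<le> 72 * \<theta> * (\<Sum>i<n. (d i)^2)"
proof -
  define K where "K = (\<Sum>i<n. (d i)^2)"
  define Y where "Y = (\<lambda>c. \<Sum>i<n. c i * d i)"
  have pw: "(Y c)^2 * exp (la * \<bar>Y c\<bar>) \<le> 2 / la^2 * (exp ((2*la) * Y c) + exp ((-(2*la)) * Y c) - 2)" for c
  proof -
    have "(la * \<bar>Y c\<bar>)^2 * exp (la * \<bar>Y c\<bar>) \<le> 2 * (exp (2*(la * \<bar>Y c\<bar>)) + exp (-(2*(la * \<bar>Y c\<bar>))) - 2)"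
      using assms by (intro sq_exp_bound) auto
    also have "exp (2*(la * \<bar>Y c\<bar>)) + exp (-(2*(la * \<bar>Y c\<bar>))) = exp ((2*la) * Y c) + exp ((-(2*la)) * Y c)"
      by (cases "Y c \<ge> 0") (auto simp: mult_ac)
    finally have "la^2 * ((Y c)^2 * exp (la * \<bar>Y c\<bar>)) \<le> 2 * (exp ((2*la) * Y c) + exp ((-(2*la)) * Y c) - 2)"
      by (simp add: power_mult_distrib mult_ac)
    thus ?thesis using assms by (simp add: field_simps)
  qed
  have b1: "measure_pmf.expectation (colQ n \<theta>) (\<lambda>c. exp (\<mu> * Y c)) \<le> 1 + 3 * (3/2 * \<theta> * \<mu>^2 * K)"
    if "\<mu> = 2*la \<or> \<mu> = -(2*la)" for \<mu>
  proof -
    have "\<forall>i<n. \<bar>\<mu> * d i\<bar> \<le> 1" using assms that by (auto simp: abs_mult)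
    moreover have "3/2 * \<theta> * \<mu>^2 * K \<le> 1" using assms that by (auto simp: K_def power_mult_distrib)
    ultimately show ?thesis unfolding Y_def K_def using assms by (intro col_mgf_bound) auto
  qed
  have int: "integrable (measure_pmf (colQ n \<theta>)) f" for f :: "_ \<Rightarrow> real"
    by (simp add: integrable_measure_pmf_finite finite_colQ)
  have "measure_pmf.expectation (colQ n \<theta>) (\<lambda>c. (Y c)^2 * exp (la * \<bar>Y c\<bar>))
      \<le> measure_pmf.expectation (colQ n \<theta>) (\<lambda>c. 2 / la^2 * (exp ((2*la) * Y c) + exp ((-(2*la)) * Y c) - 2))"
    by (intro integral_mono int pw)
  also have "\<dots> = 2 / la^2 * (measure_pmf.expectation (colQ n \<theta>) (\<lambda>c. exp ((2*la) * Y c))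
          + measure_pmf.expectation (colQ n \<theta>) (\<lambda>c. exp ((-(2*la)) * Y c)) - 2)"
    by (simp add: int)
  also have "\<dots> \<le> 2 / la^2 * ((1 + 3 * (3/2 * \<theta> * (2*la)^2 * K)) + (1 + 3 * (3/2 * \<theta> * (-(2*la))^2 * K)) - 2)"
    using b1[of "2*la"] b1[of "-(2*la)"] assms by (intro mult_left_mono) (auto simp: algebra_simps)
  also have "\<dots> = 72 * \<theta> * K"
    using assms by (simp add: field_simps power2_eq_square)
  finally show ?thesis by (simp add: Y_def K_def)
qed

lemma col_g:
  assumes "0 \<le> \<theta>" "\<theta> \<le> 1" "la > 0" "\<forall>i<n. 2 * la * \<bar>v i - w i\<bar> \<le> 1"
      "6 * \<theta> * la^2 * (\<Sum>i<n. (v i - w i)^2) \<le> 1"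
  shows "measure_pmf.expectation (colQ n \<theta>) (\<lambda>c. exp (la * (\<bar>\<Sum>i<n. c i * v i\<bar> - \<bar>\<Sum>i<n. c i * w i\<bar>)))
       \<le> exp (la * measure_pmf.expectation (colQ n \<theta>) (\<lambda>c. \<bar>\<Sum>i<n. c i * v i\<bar> - \<bar>\<Sum>i<n. c i * w i\<bar>)
              + 36 * la^2 * \<theta> * (\<Sum>i<n. (v i - w i)^2))"
proof -
  define K where "K = (\<Sum>i<n. (v i - w i)^2)"
  define Y where "Y = (\<lambda>c. \<Sum>i<n. c i * (v i - w i))"
  define g where "g = (\<lambda>c. \<bar>\<Sum>i<n. c i * v i\<bar> - \<bar>\<Sum>i<n. c i * w i\<bar>)"
  have int: "integrable (measure_pmf (colQ n \<theta>)) f" for f :: "_ \<Rightarrow> real"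
    by (simp add: integrable_measure_pmf_finite finite_colQ)
  have gY: "\<bar>g c\<bar> \<le> \<bar>Y c\<bar>" for c
  proof -
    have "Y c = (\<Sum>i<n. c i * v i) - (\<Sum>i<n. c i * w i)"
      by (simp add: Y_def right_diff_distrib sum_subtractf)
    thus ?thesis unfolding g_def by linarith
  qed
  have pw: "exp (la * g c) \<le> 1 + la * g c + la^2/2 * ((Y c)^2 * exp (la * \<bar>Y c\<bar>))" for c
  proof -
    have "exp (la * g c) \<le> 1 + la * g c + (la * g c)^2/2 * exp \<bar>la * g c\<bar>" by (rule exp_quad_bound)
    also have "(la * g c)^2 \<le> la^2 * (Y c)^2"
      using gY[of c] by (simp add: power_mult_distrib abs_le_square_iff mult_left_mono)
    hence "(la * g c)^2/2 * exp \<bar>la * g c\<bar> \<le> la^2 * (Y c)^2 / 2 * exp (la * \<bar>Y c\<bar>)"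
      using gY[of c] assms by (intro mult_mono divide_right_mono) (auto simp: abs_mult)
    finally show ?thesis by simp
  qed
  have "measure_pmf.expectation (colQ n \<theta>) (\<lambda>c. exp (la * g c))
      \<le> measure_pmf.expectation (colQ n \<theta>) (\<lambda>c. 1 + la * g c + la^2/2 * ((Y c)^2 * exp (la * \<bar>Y c\<bar>)))"
    by (intro integral_mono int pw)
  also have "\<dots> = 1 + la * measure_pmf.expectation (colQ n \<theta>) g
       + la^2/2 * measure_pmf.expectation (colQ n \<theta>) (\<lambda>c. (Y c)^2 * exp (la * \<bar>Y c\<bar>))"
    by (simp add: int)
  also have "\<dots> \<le> 1 + la * measure_pmf.expectation (colQ n \<theta>) g + la^2/2 * (72 * \<theta> * K)"
    using Y_bound[of \<theta> la n "\<lambda>i. v i - w i"] assms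
    by (intro add_left_mono mult_left_mono) (auto simp: Y_def K_def)
  also have "\<dots> \<le> exp (la * measure_pmf.expectation (colQ n \<theta>) g + 36 * la^2 * \<theta> * K)"
    using exp_ge_add_one_self[of "la * measure_pmf.expectation (colQ n \<theta>) g + 36 * la^2 * \<theta> * K"]
    by (simp add: algebra_simps)
  finally show ?thesis by (simp add: g_def K_def)
qed

lemma tail:
  assumes "0 \<le> \<theta>" "\<theta> \<le> 1" "la > 0" "\<forall>i<n. 2 * la * \<bar>v i - w i\<bar> \<le> 1"
      "6 * \<theta> * la^2 * (\<Sum>i<n. (v i - w i)^2) \<le> 1"
  shows "measure_pmf.prob (matrix_pmf n p \<theta>)
           {X. XT_l1 n p X v - XT_l1 n p X w \<ge> mu n p \<theta> v - mu n p \<theta> w + s}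
         \<le> exp (- la * s + real p * (36 * la^2 * \<theta> * (\<Sum>i<n. (v i - w i)^2)))"
proof -
  define K where "K = (\<Sum>i<n. (v i - w i)^2)"
  define g where "g = (\<lambda>c. \<bar>\<Sum>i<n. c i * v i\<bar> - \<bar>\<Sum>i<n. c i * w i\<bar>)"
  define M where "M = matrix_pmf n p \<theta>"
  define D where "D = (\<lambda>X. XT_l1 n p X v - XT_l1 n p X w)"
  define m where "m = mu n p \<theta> v - mu n p \<theta> w"
  have intQ: "integrable (measure_pmf (colQ n \<theta>)) f" for f :: "_ \<Rightarrow> real"
    by (simp add: integrable_measure_pmf_finite finite_colQ)
  have finM: "finite (set_pmf M)"
  proof -
    have "finite (set_pmf (map_pmf (\<lambda>M x. M (snd x) (fst x)) (Pi_pmf {..<p} (\<lambda>_. 0) (\<lambda>_. colQ n \<theta>))))"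
      unfolding set_map_pmf by (intro finite_imageI finite_nested)
    thus ?thesis unfolding M_def matrix_col .
  qed
  have intM: "integrable (measure_pmf M) f" for f :: "_ \<Rightarrow> real"
    by (simp add: integrable_measure_pmf_finite finM)
  have Dsum: "D X = (\<Sum>j<p. g (\<lambda>i. X (i, j)))" for X
    by (simp add: D_def XT_l1_def g_def sum_subtractf)
  have muv: "mu n p \<theta> u = real p * measure_pmf.expectation (colQ n \<theta>) (\<lambda>c. \<bar>\<Sum>i<n. c i * u i\<bar>)" for u
    unfolding mu_def XT_l1_def by (rule matrix_sum)
  have mEq: "m = real p * measure_pmf.expectation (colQ n \<theta>) g"
    unfolding m_def muv g_def by (simp add: intQ right_diff_distrib)
  have "measure_pmf.prob M {X. D X \<ge> m + s} = measure_pmf.expectation M (indicator {X. D X \<ge> m + s})"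
    by simp
  also have "\<dots> \<le> measure_pmf.expectation M (\<lambda>X. exp (la * (D X - m - s)))"
  proof (intro integral_mono intM)
    fix X show "indicator {X. D X \<ge> m + s} X \<le> exp (la * (D X - m - s))"
      using assms(3) by (auto simp: indicator_def)
  qed
  also have "\<dots> = exp (- la * (m + s)) * measure_pmf.expectation M (\<lambda>X. exp (la * D X))"
  proof -
    have "(\<lambda>X. exp (la * (D X - m - s))) = (\<lambda>X. exp (- la * (m + s)) * exp (la * D X))"
      by (auto simp: fun_eq_iff algebra_simps simp flip: exp_add)
    thus ?thesis by simp
  qed
  also have "measure_pmf.expectation M (\<lambda>X. exp (la * D X))
      = measure_pmf.expectation M (\<lambda>X. \<Prod>j<p. exp (la * g (\<lambda>i. X (i, j))))"
    by (simp add: Dsum sum_distrib_left exp_sum)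
  also have "\<dots> = (measure_pmf.expectation (colQ n \<theta>) (\<lambda>c. exp (la * g c))) ^ p"
    unfolding M_def by (rule matrix_prod) simp
  also have "\<dots> \<le> (exp (la * measure_pmf.expectation (colQ n \<theta>) g + 36 * la^2 * \<theta> * K)) ^ p"
    using col_g[OF assms] unfolding g_def K_def
    by (intro power_mono) (auto intro!: integral_nonneg_AE)
  also have "\<dots> = exp (real p * (la * measure_pmf.expectation (colQ n \<theta>) g + 36 * la^2 * \<theta> * K))"
    by (simp add: exp_of_nat_mult)
  finally have "measure_pmf.prob M {X. D X \<ge> m + s}
     \<le> exp (- la * (m + s)) * exp (real p * (la * measure_pmf.expectation (colQ n \<theta>) g + 36 * la^2 * \<theta> * K))"
    by (simp add: mult_left_mono)
  also have "\<dots> = exp (- la * s + real p * (36 * la^2 * \<theta> * K))"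
    by (simp add: mEq flip: exp_add) (simp add: algebra_simps)
  finally show ?thesis by (simp add: M_def D_def m_def K_def)
qed

lemma final_arith:
  fixes c0 C n p \<theta> \<alpha> L r :: real
  assumes c0: "c0 > 0" and C: "C * c0^2 \<ge> 10000" and n: "n \<ge> 2" and L: "L \<ge> c0 + 1"
    and th: "\<theta> \<ge> 1/n" "\<theta> \<le> 1" and p: "p \<ge> C*n*L^3" and r: "r = sqrt (\<theta>/n)"
    and al: "\<alpha> > 0" "n*\<alpha> \<ge> 2" "\<alpha> \<le> 1"
  defines "T \<equiv> c0*p*r/L"
  defines "ss \<equiv> 5*T/6"
  defines "la \<equiv> ss/(288*p*\<theta>*\<alpha>)"
  shows "la > 0" "4*la*\<alpha> \<le> 1" "24*\<theta>*la^2*\<alpha> \<le> 1"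
        "p*(36*la^2*\<theta>*(4*\<alpha>)) - la * ss \<le> -(10*L/\<alpha>)"
proof -
  have Lp: "L > 0" "L \<ge> 1" "L \<ge> c0" using L c0 by auto
  have thp: "\<theta> > 0" using th n by (smt (verit) divide_pos_pos)
  have nth: "n*\<theta> \<ge> 1" using th n by (simp add: field_simps)
  have Cp: "C > 0" using C c0 by (smt (verit) mult_nonpos_nonneg zero_le_power2)
  have pp: "p > 0" using p Cp n Lp by (smt (verit) mult_pos_pos zero_less_power)
  have rp: "r > 0" using r thp n by simp
  have r2: "r^2 = \<theta>/n" using r thp n by simp
  have rth: "r \<le> \<theta>"
  proof -
    have "\<theta> * (1/n) \<le> \<theta> * \<theta>" using th(1) thp by (intro mult_left_mono) auto
    hence "r^2 \<le> \<theta>^2" using r2 by (simp add: power2_eq_square)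
    thus ?thesis using rp thp power2_le_imp_le[of r \<theta>] by simp
  qed
  have Tp: "T > 0" unfolding T_def using c0 pp rp Lp by simp
  have sp: "ss > 0" unfolding ss_def using Tp by simp
  show lap: "la > 0" unfolding la_def using sp pp thp al by simp
  have "4*la*\<alpha> = (5*c0/(432*L)) * (r/\<theta>)"
    unfolding la_def ss_def T_def using pp thp al Lp by (simp add: field_simps)
  also have "\<dots> \<le> 1 * 1"
  proof (intro mult_mono)
    show "5*c0/(432*L) \<le> 1" using Lp c0 by (simp add: field_simps)
    show "r/\<theta> \<le> 1" using rth thp by simp
  qed (use c0 Lp rp thp in auto)
  finally show "4*la*\<alpha> \<le> 1" by simp
  have "24*\<theta>*la^2*\<alpha> = (25/124416) * (c0^2/L^2) * (1/(n*\<alpha>))"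
    unfolding la_def ss_def T_def using pp thp al Lp n r2
    by (simp add: field_simps power2_eq_square)
  also have "\<dots> \<le> (25/124416) * 1 * 1"
  proof (intro mult_mono)
    show "c0^2/L^2 \<le> 1" using Lp c0 by (simp add: power_mono)
    show "1/(n*\<alpha>) \<le> 1" using al by simp
  qed (use c0 Lp al n in auto)
  finally show "24*\<theta>*la^2*\<alpha> \<le> 1" by simp
  have ls: "la * ss = (25/10368) * (c0^2 * p) / (n * L^2 * \<alpha>)"
    unfolding la_def ss_def T_def using pp thp al Lp n r2
    by (simp add: field_simps power2_eq_square)
  have "la * ss \<ge> 20*L/\<alpha>"
  proof -
    have "c0^2 * p \<ge> c0^2 * (C*n*L^3)" using p c0 by (intro mult_left_mono) auto
    hence "c0^2 * p \<ge> (C*c0^2) * n * L^3" by (simp add: algebra_simps)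
    moreover have "(C*c0^2) * n * L^3 \<ge> 10000 * n * L^3"
      using C n Lp by (intro mult_right_mono) auto
    ultimately have "c0^2*p \<ge> 10000 * n * L^3" by linarith
    hence "(25/10368) * (10000 * n * L^3) \<le> (25/10368) * (c0^2 * p)"
      by (rule mult_left_mono) auto
    hence "(25/10368) * (c0^2 * p) / (n * L^2 * \<alpha>) \<ge> (25/10368) * (10000 * n * L^3) / (n * L^2 * \<alpha>)"
      using n Lp al by (intro divide_right_mono) auto
    also have "(25/10368) * (10000 * n * L^3) / (n * L^2 * \<alpha>) = (250000/10368) * L / \<alpha>"
      using n Lp al by (simp add: field_simps power2_eq_square power3_eq_cube)
    finally have "la * ss \<ge> (250000/10368) * L / \<alpha>" using ls by simp
    moreover have "(250000/10368) * L / \<alpha> \<ge> 20*L/\<alpha>" using Lp al by (intro divide_right_mono) auto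
    ultimately show ?thesis by linarith
  qed
  moreover have "p*(36*la^2*\<theta>*(4*\<alpha>)) = la * ss/2"
    unfolding la_def using pp thp al by (simp add: field_simps power2_eq_square)
  ultimately show "p*(36*la^2*\<theta>*(4*\<alpha>)) - la * ss \<le> -(10*L/\<alpha>)" by simp
qed

lemma two_sided:
  assumes "0 \<le> \<theta>" "\<theta> \<le> 1" "la > 0" "\<forall>i<n. 2 * la * \<bar>v i - w i\<bar> \<le> 1"
      "6 * \<theta> * la^2 * (\<Sum>i<n. (v i - w i)^2) \<le> 1"
      "\<bar>mu n p \<theta> v - mu n p \<theta> w\<bar> \<le> T / 6"
  shows "measure_pmf.prob (matrix_pmf n p \<theta>)
           {X. \<bar>XT_l1 n p X v - XT_l1 n p X w\<bar> \<ge> T}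
         \<le> 2 * exp (- la * (5*T/6) + real p * (36 * la^2 * \<theta> * (\<Sum>i<n. (v i - w i)^2)))"
proof -
  define M where "M = matrix_pmf n p \<theta>"
  define E where "E = exp (- la * (5*T/6) + real p * (36 * la^2 * \<theta> * (\<Sum>i<n. (v i - w i)^2)))"
  have sq: "(\<Sum>i<n. (w i - v i)^2) = (\<Sum>i<n. (v i - w i)^2)"
    by (intro sum.cong refl) (simp add: power2_commute)
  have A1: "measure_pmf.prob M {X. XT_l1 n p X v - XT_l1 n p X w \<ge> mu n p \<theta> v - mu n p \<theta> w + 5*T/6} \<le> E"
    unfolding M_def E_def by (rule tail[OF assms(1-5)])
  have A2: "measure_pmf.prob M {X. XT_l1 n p X w - XT_l1 n p X v \<ge> mu n p \<theta> w - mu n p \<theta> v + 5*T/6} \<le> E"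
  proof -
    have a4: "\<forall>i<n. 2 * la * \<bar>w i - v i\<bar> \<le> 1" using assms(4) by (simp add: abs_minus_commute)
    have a5: "6 * \<theta> * la^2 * (\<Sum>i<n. (w i - v i)^2) \<le> 1" using assms(5) sq by simp
    show ?thesis unfolding M_def E_def using tail[OF assms(1-3) a4 a5, of p "5*T/6"] sq by simp
  qed
  have "{X. \<bar>XT_l1 n p X v - XT_l1 n p X w\<bar> \<ge> T} \<subseteq>
     {X. XT_l1 n p X v - XT_l1 n p X w \<ge> mu n p \<theta> v - mu n p \<theta> w + 5*T/6} \<union>
     {X. XT_l1 n p X w - XT_l1 n p X v \<ge> mu n p \<theta> w - mu n p \<theta> v + 5*T/6}"
    using assms(6) by (auto simp: abs_if split: if_split_asm)
  hence "measure_pmf.prob M {X. \<bar>XT_l1 n p X v - XT_l1 n p X w\<bar> \<ge> T} \<le>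
     measure_pmf.prob M ({X. XT_l1 n p X v - XT_l1 n p X w \<ge> mu n p \<theta> v - mu n p \<theta> w + 5*T/6} \<union>
     {X. XT_l1 n p X w - XT_l1 n p X v \<ge> mu n p \<theta> w - mu n p \<theta> v + 5*T/6})"
    by (intro measure_pmf.finite_measure_mono) auto
  also have "\<dots> \<le> measure_pmf.prob M {X. XT_l1 n p X v - XT_l1 n p X w \<ge> mu n p \<theta> v - mu n p \<theta> w + 5*T/6}
     + measure_pmf.prob M {X. XT_l1 n p X w - XT_l1 n p X v \<ge> mu n p \<theta> w - mu n p \<theta> v + 5*T/6}"
    by (intro measure_Un_le) auto
  finally show ?thesis using A1 A2 unfolding M_def E_def by linarith
qed

theorem mainTheorem8:
  shows "\<forall>c0::real. c0 > 0 \<longrightarrow> (\<exists>C0::real. C0 > 0 \<and> (\<forall>C::real. C \<ge> C0 \<longrightarrow>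
    (\<forall>\<^sub>F n in sequentially.
      \<forall>\<theta>::real. 1 / real n \<le> \<theta> \<and> \<theta> \<le> 1 \<longrightarrow>
       (let p = nat \<lceil>C * real n * (ln (real n)) ^ 3\<rceil>;
            T = c0 * real p * sqrt (\<theta> / real n) / ln (real n) in
        \<forall>(l::nat) (\<alpha>::real). \<alpha> = 2 ^ l * (2 / real n) \<longrightarrow> \<alpha> \<le> 1 \<longrightarrow>
         (\<forall>v w :: nat \<Rightarrow> real.
            (\<Sum>i<n. \<bar>v i\<bar>) \<le> 1 \<longrightarrow> (\<Sum>i<n. \<bar>w i\<bar>) \<le> 1 \<longrightarrow>
            (\<forall>i<n. \<bar>v i - w i\<bar> \<le> 2 * \<alpha>) \<longrightarrow>
            \<bar>mu n p \<theta> v - mu n p \<theta> w\<bar> \<le> T / 6 \<longrightarrow>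
            measure_pmf.prob (matrix_pmf n p \<theta>)
              {X. \<bar>XT_l1 n p X v - XT_l1 n p X w\<bar> \<ge> T}
            \<le> exp (- 5 * (1 / \<alpha>) * ln (real n)))))))"
proof (intro allI impI)
  fix c0 :: real assume c0: "c0 > 0"
  define C0 where "C0 = 10000 / c0^2"
  show "\<exists>C0::real. C0 > 0 \<and> (\<forall>C::real. C \<ge> C0 \<longrightarrow>
    (\<forall>\<^sub>F n in sequentially.
      \<forall>\<theta>::real. 1 / real n \<le> \<theta> \<and> \<theta> \<le> 1 \<longrightarrow>
       (let p = nat \<lceil>C * real n * (ln (real n)) ^ 3\<rceil>;
            T = c0 * real p * sqrt (\<theta> / real n) / ln (real n) in
        \<forall>(l::nat) (\<alpha>::real). \<alpha> = 2 ^ l * (2 / real n) \<longrightarrow> \<alpha> \<le> 1 \<longrightarrow>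
         (\<forall>v w :: nat \<Rightarrow> real.
            (\<Sum>i<n. \<bar>v i\<bar>) \<le> 1 \<longrightarrow> (\<Sum>i<n. \<bar>w i\<bar>) \<le> 1 \<longrightarrow>
            (\<forall>i<n. \<bar>v i - w i\<bar> \<le> 2 * \<alpha>) \<longrightarrow>
            \<bar>mu n p \<theta> v - mu n p \<theta> w\<bar> \<le> T / 6 \<longrightarrow>
            measure_pmf.prob (matrix_pmf n p \<theta>)
              {X. \<bar>XT_l1 n p X v - XT_l1 n p X w\<bar> \<ge> T}
            \<le> exp (- 5 * (1 / \<alpha>) * ln (real n))))))"
  proof (intro exI[of _ C0] conjI allI impI)
    show "C0 > 0" using c0 by (simp add: C0_def)
    fix C :: real assume CC: "C \<ge> C0"
    have Cc: "C * c0^2 \<ge> 10000"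
    proof -
      have "C0 * c0^2 \<le> C * c0^2" using CC by (intro mult_right_mono) auto
      moreover have "C0 * c0^2 = 10000" using c0 by (simp add: C0_def)
      ultimately show ?thesis by simp
    qed
    have lim: "filterlim (\<lambda>n. ln (real n)) at_top sequentially"
      by (rule filterlim_compose[OF ln_at_top filterlim_real_sequentially])
    have ev: "\<forall>\<^sub>F n in sequentially. ln (real n) \<ge> c0 + 1"
      using lim by (simp add: filterlim_at_top)
    show "\<forall>\<^sub>F n in sequentially.
      \<forall>\<theta>::real. 1 / real n \<le> \<theta> \<and> \<theta> \<le> 1 \<longrightarrow>
       (let p = nat \<lceil>C * real n * (ln (real n)) ^ 3\<rceil>;
            T = c0 * real p * sqrt (\<theta> / real n) / ln (real n) in
        \<forall>(l::nat) (\<alpha>::real). \<alpha> = 2 ^ l * (2 / real n) \<longrightarrow> \<alpha> \<le> 1 \<longrightarrow>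
         (\<forall>v w :: nat \<Rightarrow> real.
            (\<Sum>i<n. \<bar>v i\<bar>) \<le> 1 \<longrightarrow> (\<Sum>i<n. \<bar>w i\<bar>) \<le> 1 \<longrightarrow>
            (\<forall>i<n. \<bar>v i - w i\<bar> \<le> 2 * \<alpha>) \<longrightarrow>
            \<bar>mu n p \<theta> v - mu n p \<theta> w\<bar> \<le> T / 6 \<longrightarrow>
            measure_pmf.prob (matrix_pmf n p \<theta>)
              {X. \<bar>XT_l1 n p X v - XT_l1 n p X w\<bar> \<ge> T}
            \<le> exp (- 5 * (1 / \<alpha>) * ln (real n))))"
    proof (rule eventually_mono[OF ev], intro allI impI, unfold Let_def, intro allI impI)
      fix n :: nat and \<theta> \<alpha> :: real and l :: nat and v w :: "nat \<Rightarrow> real"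
      assume Ln: "ln (real n) \<ge> c0 + 1"
        and th: "1 / real n \<le> \<theta> \<and> \<theta> \<le> 1"
        and al: "\<alpha> = 2 ^ l * (2 / real n)" and al1: "\<alpha> \<le> 1"
        and v1: "(\<Sum>i<n. \<bar>v i\<bar>) \<le> 1" and w1: "(\<Sum>i<n. \<bar>w i\<bar>) \<le> 1"
        and vw: "\<forall>i<n. \<bar>v i - w i\<bar> \<le> 2 * \<alpha>"
      define L where "L = ln (real n)"
      define p where "p = nat \<lceil>C * real n * L ^ 3\<rceil>"
      define r where "r = sqrt (\<theta> / real n)"
      define T where "T = c0 * real p * r / L"
      assume mu: "\<bar>mu n (nat \<lceil>C * real n * (ln (real n)) ^ 3\<rceil>) \<theta> v - mu n (nat \<lceil>C * real n * (ln (real n)) ^ 3\<rceil>) \<theta> w\<bar>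
          \<le> c0 * real (nat \<lceil>C * real n * (ln (real n)) ^ 3\<rceil>) * sqrt (\<theta> / real n) / ln (real n) / 6"
      have L: "L \<ge> c0 + 1" using Ln by (simp add: L_def)
      have n2: "real n \<ge> 2"
      proof (rule ccontr)
        assume "\<not> real n \<ge> 2"
        hence "n = 0 \<or> n = 1" by linarith
        thus False using L c0 by (auto simp: L_def)
      qed
      have p: "real p \<ge> C * real n * L^3" unfolding p_def by linarith
      have alp: "\<alpha> > 0" using al n2 by simp
      have nal: "real n * \<alpha> \<ge> 2"
      proof -
        have "real n * \<alpha> = 2 ^ l * 2" using al n2 by simp
        moreover have "(2::real) ^ l \<ge> 1" by simp
        ultimately show ?thesis by linarith
      qed
      define ss where "ss = 5*T/6"
      define la where "la = ss/(288*real p*\<theta>*\<alpha>)"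
      note fa = final_arith[OF c0 Cc n2 L th[THEN conjunct1] th[THEN conjunct2] p r_def alp nal al1,
                 folded T_def, folded ss_def, folded la_def]
      define K where "K = (\<Sum>i<n. (v i - w i)^2)"
      have K: "K \<le> 4 * \<alpha>"
      proof -
        have "K \<le> (\<Sum>i<n. (2*\<alpha>) * \<bar>v i - w i\<bar>)"
          unfolding K_def
        proof (intro sum_mono)
          fix i assume i: "i \<in> {..<n}"
          have "(v i - w i)^2 = \<bar>v i - w i\<bar> * \<bar>v i - w i\<bar>" by (simp add: power2_eq_square)
          also have "\<dots> \<le> (2*\<alpha>) * \<bar>v i - w i\<bar>" using vw i by (intro mult_right_mono) auto
          finally show "(v i - w i)^2 \<le> (2*\<alpha>) * \<bar>v i - w i\<bar>" .
        qed
        also have "\<dots> = (2*\<alpha>) * (\<Sum>i<n. \<bar>v i - w i\<bar>)" by (simp add: sum_distrib_left)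
        also have "(\<Sum>i<n. \<bar>v i - w i\<bar>) \<le> (\<Sum>i<n. \<bar>v i\<bar> + \<bar>w i\<bar>)"
          by (intro sum_mono) auto
        also have "\<dots> \<le> 2" using v1 w1 by (simp add: sum.distrib)
        finally show ?thesis using alp by (simp add: mult_left_mono)
      qed
      have K0: "K \<ge> 0" unfolding K_def by (intro sum_nonneg) auto
      have thp: "0 \<le> \<theta>" "\<theta> \<le> 1" using th n2 by (auto intro: order.trans[rotated])
      have c1: "\<forall>i<n. 2 * la * \<bar>v i - w i\<bar> \<le> 1"
      proof (intro allI impI)
        fix i assume "i < n"
        hence "2 * la * \<bar>v i - w i\<bar> \<le> 2 * la * (2*\<alpha>)" using vw fa(1) by (intro mult_left_mono) auto
        moreover have "2 * la * (2*\<alpha>) = 4 * la * \<alpha>" by simp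
        ultimately show "2 * la * \<bar>v i - w i\<bar> \<le> 1" using fa(2) by linarith
      qed
      have c2: "6 * \<theta> * la^2 * K \<le> 1"
      proof -
        have "6 * \<theta> * la^2 * K \<le> 6 * \<theta> * la^2 * (4*\<alpha>)" using K thp by (intro mult_left_mono) auto
        moreover have "6 * \<theta> * la^2 * (4*\<alpha>) = 24 * \<theta> * la^2 * \<alpha>" by simp
        ultimately show ?thesis using fa(3) by linarith
      qed
      have mu': "\<bar>mu n p \<theta> v - mu n p \<theta> w\<bar> \<le> T / 6" using mu by (simp add: p_def T_def r_def L_def)
      have "measure_pmf.prob (matrix_pmf n p \<theta>) {X. \<bar>XT_l1 n p X v - XT_l1 n p X w\<bar> \<ge> T}
          \<le> 2 * exp (- la * (5*T/6) + real p * (36 * la^2 * \<theta> * K))"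
        using two_sided[OF thp fa(1) c1 c2[unfolded K_def] mu'] by (simp add: K_def)
      also have "- la * (5*T/6) + real p * (36 * la^2 * \<theta> * K) \<le> - (10 * L / \<alpha>)"
      proof -
        have "real p * (36 * la^2 * \<theta> * K) \<le> real p * (36 * la^2 * \<theta> * (4*\<alpha>))"
          using K thp by (intro mult_left_mono) auto
        moreover have "- la * (5*T/6) = - (la * ss)" by (simp add: ss_def)
        ultimately show ?thesis using fa(4) by linarith
      qed
      hence "2 * exp (- la * (5*T/6) + real p * (36 * la^2 * \<theta> * K)) \<le> 2 * exp (- (10 * L / \<alpha>))"
        by simp
      also have "\<dots> \<le> exp (- 5 * (1 / \<alpha>) * L)"
      proof -
        have "5 * L / \<alpha> \<ge> ln 2"
        proof -
          have "5 * L / \<alpha> \<ge> 5 * L" using alp al1 L c0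
            by (simp add: le_divide_eq mult_left_le_one_le)
          moreover have "ln (2::real) \<le> 1" using ln_2_less_1 by simp
          ultimately show ?thesis using L c0 by linarith
        qed
        hence "2 \<le> exp (5 * L / \<alpha>)" by (metis exp_ln exp_le_cancel_iff zero_less_numeral)
        hence "2 * exp (- (10 * L / \<alpha>)) \<le> exp (5 * L / \<alpha>) * exp (- (10 * L / \<alpha>))" by simp
        also have "\<dots> = exp (- 5 * (1 / \<alpha>) * L)" by (simp flip: exp_add)
        finally show ?thesis .
      qed
      finally show "measure_pmf.prob (matrix_pmf n (nat \<lceil>C * real n * (ln (real n)) ^ 3\<rceil>) \<theta>)
          {X. c0 * real (nat \<lceil>C * real n * (ln (real n)) ^ 3\<rceil>) * sqrt (\<theta> / real n) / ln (real n)
              \<le> \<bar>XT_l1 n (nat \<lceil>C * real n * (ln (real n)) ^ 3\<rceil>) X v - XT_l1 n (nat \<lceil>C * real n * (ln (real n)) ^ 3\<rceil>) X w\<bar>}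
          \<le> exp (- 5 * (1 / \<alpha>) * ln (real n))"
        by (simp add: p_def T_def r_def L_def)
    qed
  qed
qed

end
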